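(* Suppose A1–A3 hold and let $\{x_k\}$ be generated by Algorithm 1 with the Metropolis-based choice $$\nu_{k,l}=\sigma\exp\!\Big(-\max\{\theta,\ f(x_k+\alpha_k\beta^l d_k)-f(x_k)\}\,\ln(k+1)\Big)$$ for constants $\sigma>0$, $\theta>1$. Let $\epsilon>0$. If $T$ is a positive integer with $$T\ge 2\max\left\{\sigma\sum_{k=0}^{\infty}\frac{1}{(k+1)^\theta},\ f(x_0)-f_{low}\right\}\kappa_c^{-1}\epsilon^{-2},$$ then $\min_{k=0,\dots,T-1}\|\nabla f(x_k)\|\le\epsilon$.
   Context: Let $(X,\langle\cdot,\cdot\rangle)$ be a real Hilbert space with induced norm $\|\cdot\|$, and $f:X\to\mathbb{R}$ Fréchet differentiable with gradient $\nabla f$. Algorithm 1 (general non-monotone descent algorithm): parameters $x_0\in X$, $\alpha_0>0$, $\beta,\rho\in(0,1)$. For $k=0,1,2,\dots$: choose $d_k\in X$ with $\langle\nabla f(x_k),d_k\rangle<0$; then for $l=0,1,2,\dots$ choose a number $\nu_{k,l}\ge 0$ and test $$f(x_k+\alpha_k\beta^l d_k)\le f(x_k)+\rho\alpha_k\beta^l\langle\nabla f(x_k),d_k\rangle+\nu_{k,l};$$ let $l_k$ be the first $l$ for which this holds, set $\nu_k:=\nu_{k,l_k}$, $x_{k+1}=x_k+\alpha_k\beta^{l_k}d_k$ and $\alpha_{k+1}=\alpha_k\beta^{l_k-1}$. It is assumed the algorithm generates infinite sequences (all $l_k$ finite). Assumptions: A1: $\nabla f$ is Lipschitz continuous with constant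 $L>0$. A2: there is $f_{low}\in\mathbb{R}$ with $f(x)\ge f_{low}$ for all $x\in X$. A3: there are constants $c_1,c_2>0$ with $\langle\nabla f(x_k),d_k\rangle\le -c_1\|\nabla f(x_k)\|^2$ and $\|d_k\|\le c_2\|\nabla f(x_k)\|$ for all $k$. Constant: $\kappa_c=\min\left\{\rho\beta\alpha_0c_1,\ \frac{2\beta\rho(1-\rho)c_1^2}{Lc_2^2}\right\}$. *)

theory Defs
  imports "HOL-Analysis.Analysis"
begin

definition metropolis_nu ::
  "('a::real_normed_vector \<Rightarrow> real) \<Rightarrow> real \<Rightarrow> real \<Rightarrow> real \<Rightarrow> nat \<Rightarrow> 'a \<Rightarrow> real \<Rightarrow> 'a \<Rightarrow> nat \<Rightarrow> real"
  where "metropolis_nu f \<sigma> \<theta> \<beta> k xk \<alpha>k dk l =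
     \<sigma> * exp (- max \<theta> (f (xk + (\<alpha>k * \<beta> ^ l) *\<^sub>R dk) - f xk) * ln (real k + 1))"

definition ls_test ::
  "('a::real_inner \<Rightarrow> real) \<Rightarrow> ('a \<Rightarrow> 'a) \<Rightarrow> real \<Rightarrow> real \<Rightarrow> 'a \<Rightarrow> real \<Rightarrow> 'a \<Rightarrow> nat \<Rightarrow> real \<Rightarrow> bool"
  where "ls_test f g \<rho> \<beta> xk \<alpha>k dk l \<nu> \<longleftrightarrow>
     f (xk + (\<alpha>k * \<beta> ^ l) *\<^sub>R dk) \<le> f xk + \<rho> * \<alpha>k * \<beta> ^ l * (g xk \<bullet> dk) + \<nu>"

definition kappa_c :: "real \<Rightarrow> real \<Rightarrow> real \<Rightarrow> real \<Rightarrow> real \<Rightarrow> real \<Rightarrow> real"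
  where "kappa_c \<rho> \<beta> \<alpha>0 c1 c2 L =
     min (\<rho> * \<beta> * \<alpha>0 * c1) (2 * \<beta> * \<rho> * (1 - \<rho>) * c1\<^sup>2 / (L * c2\<^sup>2))"

end

theory Submission
  imports Defs
begin

lemma descent_lemma:
  fixes f :: "'a::real_inner \<Rightarrow> real"
  assumes grad: "\<And>y. (f has_derivative (\<lambda>h. g y \<bullet> h)) (at y)"
    and lip: "\<And>y z. norm (g y - g z) \<le> L * norm (y - z)"
    and t: "t \<ge> 0"
  shows "f (y + t *\<^sub>R h) \<le> f y + t * (g y \<bullet> h) + L / 2 * t\<^sup>2 * (norm h)\<^sup>2"
proof -
  define \<psi> where "\<psi> s = f (y + s *\<^sub>R h) - s * (g y \<bullet> h) - L / 2 * s\<^sup>2 * (norm h)\<^sup>2" for s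
  have D: "(\<psi> has_real_derivative (g (y + s *\<^sub>R h) \<bullet> h - g y \<bullet> h - L * s * (norm h)\<^sup>2)) (at s)" for s
  proof -
    have "((\<lambda>s. y + s *\<^sub>R h) has_derivative (\<lambda>u. u *\<^sub>R h)) (at s)"
      by (auto intro!: derivative_eq_intros)
    from has_derivative_compose[OF this grad]
    have "((\<lambda>s. f (y + s *\<^sub>R h)) has_derivative (\<lambda>u. g (y + s *\<^sub>R h) \<bullet> (u *\<^sub>R h))) (at s)" .
    then have "((\<lambda>s. f (y + s *\<^sub>R h)) has_real_derivative (g (y + s *\<^sub>R h) \<bullet> h)) (at s)"
      unfolding has_field_derivative_def by (simp add: mult_commute_abs)
    then show ?thesis unfolding \<psi>_def
      by (auto intro!: derivative_eq_intros simp: power2_eq_square)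
  qed
  have "\<psi> t \<le> \<psi> 0"
  proof (rule DERIV_nonpos_imp_decreasing_open[OF t])
    fix s assume s: "0 < s" "s < t"
    have "(g (y + s *\<^sub>R h) - g y) \<bullet> h \<le> norm (g (y + s *\<^sub>R h) - g y) * norm h"
      by (rule norm_cauchy_schwarz)
    also have "\<dots> \<le> L * norm (s *\<^sub>R h) * norm h"
      using lip[of "y + s *\<^sub>R h" y] by (intro mult_right_mono) auto
    also have "\<dots> = L * s * (norm h)\<^sup>2" using s by (simp add: power2_eq_square)
    finally show "\<exists>d. (\<psi> has_real_derivative d) (at s) \<and> d \<le> 0"
      using D[of s] by (intro exI[of _ "g (y + s *\<^sub>R h) \<bullet> h - g y \<bullet> h - L * s * (norm h)\<^sup>2"])
        (auto simp: inner_diff_left)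
  next
    show "continuous_on {0..t} \<psi>"
      using D by (meson DERIV_isCont continuous_at_imp_continuous_on)
  qed
  then show ?thesis unfolding \<psi>_def by simp
qed

lemma summ_theta: "summable (\<lambda>k. 1 / (real k + 1) powr \<theta>)" if "\<theta> > 1"
proof -
  have "summable (\<lambda>n. real n powr (-\<theta>))" using summable_real_powr_iff that by simp
  then have "summable (\<lambda>n. real (n+1) powr (-\<theta>))" by (subst summable_iff_shift) 
  then show ?thesis by (simp add: powr_minus_divide add.commute)
qed

theorem theorem5:
  fixes f :: "'a::{real_inner, complete_space} \<Rightarrow> real"
    and g :: "'a \<Rightarrow> 'a"
    and x d :: "nat \<Rightarrow> 'a"
    and \<alpha> :: "nat \<Rightarrow> real"
    and lk :: "nat \<Rightarrow> nat"
    and x0 :: 'a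
    and \<alpha>0 \<beta> \<rho> L flow c1 c2 \<sigma> \<theta> \<epsilon> :: real
    and T :: nat
  assumes grad: "\<And>y. (f has_derivative (\<lambda>h. g y \<bullet> h)) (at y)"
    and params: "\<alpha>0 > 0" "0 < \<beta>" "\<beta> < 1" "0 < \<rho>" "\<rho> < 1"
    and sig: "\<sigma> > 0" and th: "\<theta> > 1"
    and init: "x 0 = x0" "\<alpha> 0 = \<alpha>0"
    and descent: "\<And>k. g (x k) \<bullet> d k < 0"
    and finite_ls: "\<And>k. \<exists>l. ls_test f g \<rho> \<beta> (x k) (\<alpha> k) (d k) l
                          (metropolis_nu f \<sigma> \<theta> \<beta> k (x k) (\<alpha> k) (d k) l)"
    and lk_def: "\<And>k. lk k = (LEAST l. ls_test f g \<rho> \<beta> (x k) (\<alpha> k) (d k) l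
                          (metropolis_nu f \<sigma> \<theta> \<beta> k (x k) (\<alpha> k) (d k) l))"
    and x_step: "\<And>k. x (Suc k) = x k + (\<alpha> k * \<beta> ^ lk k) *\<^sub>R d k"
    and \<alpha>_step: "\<And>k. \<alpha> (Suc k) = \<alpha> k * \<beta> powi (int (lk k) - 1)"
    and A1: "L > 0" "\<And>y z. norm (g y - g z) \<le> L * norm (y - z)"
    and A2: "\<And>y. f y \<ge> flow"
    and A3: "c1 > 0" "c2 > 0"
            "\<And>k. g (x k) \<bullet> d k \<le> - c1 * (norm (g (x k)))\<^sup>2"
            "\<And>k. norm (d k) \<le> c2 * norm (g (x k))"
    and eps: "\<epsilon> > 0"
    and T: "T > 0"
            "real T \<ge> 2 * max (\<sigma> * (\<Sum>k. 1 / (real k + 1) powr \<theta>)) (f x0 - flow)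
                       / kappa_c \<rho> \<beta> \<alpha>0 c1 c2 L / \<epsilon>\<^sup>2"
  shows "Min ((\<lambda>k. norm (g (x k))) ` {..<T}) \<le> \<epsilon>"
  proof -
  define \<tau> where "\<tau> = 2 * (1 - \<rho>) * c1 / (L * c2\<^sup>2)"
  define m where "m = min \<alpha>0 \<tau>"
  define \<kappa> where "\<kappa> = kappa_c \<rho> \<beta> \<alpha>0 c1 c2 L"
  define G where "G k = (norm (g (x k)))\<^sup>2" for k
  define \<nu> where "\<nu> k = metropolis_nu f \<sigma> \<theta> \<beta> k (x k) (\<alpha> k) (d k) (lk k)" for k
  define S where "S = (\<Sum>k. 1 / (real k + 1) powr \<theta>)"
  have \<tau>pos: "\<tau> > 0" unfolding \<tau>_def using params A1 A3 by auto
  have mpos: "m > 0" unfolding m_def using \<tau>pos params by auto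
  have e2: "2 * \<beta> * \<rho> * (1 - \<rho>) * c1\<^sup>2 / (L * c2\<^sup>2) = (\<rho> * \<beta> * c1) * \<tau>"
    unfolding \<tau>_def using A1 A3 by (simp add: power2_eq_square field_simps)
  have \<kappa>eq: "\<kappa> = \<rho> * \<beta> * c1 * m"
  proof -
    have "\<kappa> = min ((\<rho> * \<beta> * c1) * \<alpha>0) ((\<rho> * \<beta> * c1) * \<tau>)"
      unfolding \<kappa>_def kappa_c_def e2 by (simp add: mult_ac)
    also have "\<dots> = (\<rho> * \<beta> * c1) * m" unfolding m_def using params A3
      by (simp add: min_mult_distrib_left)
    finally show ?thesis .
  qed
  have \<kappa>pos: "\<kappa> > 0" unfolding \<kappa>eq using params A3 mpos by auto
  have nu_nonneg: "metropolis_nu f \<sigma> \<theta> \<beta> k y a e l \<ge> 0" for k y a e l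
    unfolding metropolis_nu_def using sig by auto
  have nu_le: "\<nu> k \<le> \<sigma> * (1 / (real k + 1) powr \<theta>)" for k
  proof -
    have ln0: "ln (real k + 1) \<ge> 0" by simp
    have "exp (- max \<theta> (f (x k + (\<alpha> k * \<beta> ^ lk k) *\<^sub>R d k) - f (x k)) * ln (real k + 1))
        \<le> exp (- \<theta> * ln (real k + 1))"
      using mult_right_mono[OF max.cobounded1 ln0] by simp
    also have "\<dots> = 1 / (real k + 1) powr \<theta>"
      by (simp add: powr_def exp_minus field_simps)
    finally show ?thesis unfolding \<nu>_def metropolis_nu_def using sig
      by (intro mult_left_mono) auto
  qed
  have test: "ls_test f g \<rho> \<beta> (x k) (\<alpha> k) (d k) (lk k) (\<nu> k)" for k
    unfolding lk_def \<nu>_def using finite_ls[of k] by (rule LeastI_ex)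
  have notest: "\<not> ls_test f g \<rho> \<beta> (x k) (\<alpha> k) (d k) l
                          (metropolis_nu f \<sigma> \<theta> \<beta> k (x k) (\<alpha> k) (d k) l)" if "l < lk k" for k l
    using that unfolding lk_def by (rule not_less_Least)
  have \<alpha>rel: "\<alpha> (Suc k) * \<beta> = \<alpha> k * \<beta> ^ lk k" for k
    using \<alpha>_step[of k] power_int_minus_mult[of \<beta> "int (lk k)"] params by (simp add: mult.assoc)
  have \<alpha>pos: "\<alpha> k > 0" for k
  proof (induction k)
    case 0 then show ?case using init params by simp
  next
    case (Suc k)
    have "\<alpha> (Suc k) * \<beta> > 0" unfolding \<alpha>rel using Suc params by simp
    then show ?case using params by (simp add: zero_less_mult_iff)
  qed
  have suff: "ls_test f g \<rho> \<beta> (x k) (\<alpha> k) (d k) l v" if t: "\<alpha> k * \<beta> ^ l \<le> \<tau>" and v: "v \<ge> 0" for k l v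
  proof -
    define t where "t = \<alpha> k * \<beta> ^ l"
    have tpos: "t > 0" unfolding t_def using \<alpha>pos params by simp
    have tt: "t \<le> \<tau>" using t unfolding t_def by simp
    have dl: "f (x k + t *\<^sub>R d k) \<le> f (x k) + t * (g (x k) \<bullet> d k) + L / 2 * t\<^sup>2 * (norm (d k))\<^sup>2"
      using descent_lemma[OF grad A1(2), of t] tpos by simp
    have nd: "(norm (d k))\<^sup>2 \<le> c2\<^sup>2 * G k"
      using power_mono[OF A3(4)[of k] norm_ge_zero, of 2] unfolding G_def by (simp add: power_mult_distrib)
    have gd: "g (x k) \<bullet> d k \<le> - c1 * G k" unfolding G_def using A3(3) .
    have G0: "G k \<ge> 0" unfolding G_def by simp
    have "L / 2 * t\<^sup>2 * (norm (d k))\<^sup>2 \<le> L / 2 * t\<^sup>2 * (c2\<^sup>2 * G k)"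
      using nd A1 by (intro mult_left_mono) auto
    also have "\<dots> = t * (L * c2\<^sup>2 / 2 * G k) * t" by (simp add: power2_eq_square)
    also have "\<dots> \<le> t * (L * c2\<^sup>2 / 2 * G k) * \<tau>"
      using tt tpos G0 A1 by (intro mult_left_mono) auto
    also have "\<dots> = t * (1 - \<rho>) * c1 * G k" unfolding \<tau>_def using A1 A3 by (simp add: field_simps)
    finally have q: "L / 2 * t\<^sup>2 * (norm (d k))\<^sup>2 \<le> t * (1 - \<rho>) * c1 * G k" .
    have "(1 - \<rho>) * t * (g (x k) \<bullet> d k) \<le> (1 - \<rho>) * t * (- c1 * G k)"
      using gd params tpos by (intro mult_left_mono) auto
    with dl q v have "f (x k + t *\<^sub>R d k) \<le> f (x k) + \<rho> * t * (g (x k) \<bullet> d k) + v"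
      by (simp add: algebra_simps)
    then show ?thesis unfolding ls_test_def t_def by (simp add: mult.assoc)
  qed
  have big: "\<alpha> k * \<beta> ^ (lk k - 1) > \<tau>" if "lk k > 0" for k
  proof (rule ccontr)
    assume "\<not> ?thesis"
    then have "\<alpha> k * \<beta> ^ (lk k - 1) \<le> \<tau>" by simp
    from suff[OF this nu_nonneg] notest[of "lk k - 1" k] that show False by simp
  qed
  have pow: "\<beta> ^ lk k = \<beta> ^ (lk k - 1) * \<beta>" if "lk k > 0" for k
    using that by (cases "lk k") (auto simp: mult.commute)
  have \<alpha>low: "\<alpha> k \<ge> m" for k
  proof (induction k)
    case 0 then show ?case using init m_def by simp
  next
    case (Suc k)
    show ?case
    proof (cases "lk k = 0")
      case True
      have "\<alpha> (Suc k) * \<beta> = \<alpha> k" using \<alpha>rel[of k] True by simp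
      moreover have "\<alpha> (Suc k) * \<beta> \<le> \<alpha> (Suc k) * 1"
        using params \<alpha>pos[of "Suc k"] by (intro mult_left_mono) auto
      ultimately have "\<alpha> (Suc k) \<ge> \<alpha> k" by simp
      then show ?thesis using Suc by simp
    next
      case False
      have "\<alpha> (Suc k) * \<beta> = \<alpha> k * \<beta> ^ (lk k - 1) * \<beta>" using \<alpha>rel[of k] pow[of k] False by simp
      then have "\<alpha> (Suc k) = \<alpha> k * \<beta> ^ (lk k - 1)" using params by simp
      then show ?thesis using big[of k] False m_def by simp
    qed
  qed
  have tk: "\<alpha> k * \<beta> ^ lk k \<ge> \<beta> * m" for k
  proof (cases "lk k = 0")
    case True
    have "\<beta> * m \<le> 1 * m" using params mpos by (intro mult_right_mono) auto
    then show ?thesis using \<alpha>low[of k] True by simp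
  next
    case False
    have "\<beta> * m \<le> \<beta> * \<tau>" using params m_def by simp
    also have "\<dots> \<le> \<beta> * (\<alpha> k * \<beta> ^ (lk k - 1))" using big[of k] False params by simp
    finally show ?thesis using pow[of k] False by (simp add: mult_ac)
  qed
  have dec: "f (x (Suc k)) \<le> f (x k) - \<kappa> * G k + \<sigma> * (1 / (real k + 1) powr \<theta>)" for k
  proof -
    have G0: "G k \<ge> 0" unfolding G_def by simp
    have gd: "g (x k) \<bullet> d k \<le> - c1 * G k" unfolding G_def using A3(3) .
    have "f (x (Suc k)) \<le> f (x k) + \<rho> * (\<alpha> k * \<beta> ^ lk k) * (g (x k) \<bullet> d k) + \<nu> k"
      using test[of k] x_step[of k] unfolding ls_test_def by (simp add: mult.assoc)
    also have "\<rho> * (\<alpha> k * \<beta> ^ lk k) * (g (x k) \<bullet> d k) \<le> \<rho> * (\<alpha> k * \<beta> ^ lk k) * (- c1 * G k)"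
      using gd params \<alpha>pos[of k] by (intro mult_left_mono) auto
    also have "\<dots> \<le> \<rho> * (\<beta> * m) * (- c1 * G k)"
      using tk[of k] params A3 G0 by (intro mult_right_mono_neg mult_left_mono) auto
    also have "\<rho> * (\<beta> * m) * (- c1 * G k) = - \<kappa> * G k" unfolding \<kappa>eq by simp
    finally show ?thesis using nu_le[of k] by simp
  qed
  have tele: "f (x n) \<le> f x0 - \<kappa> * (\<Sum>k<n. G k) + \<sigma> * (\<Sum>k<n. 1 / (real k + 1) powr \<theta>)" for n
  proof (induction n)
    case 0 then show ?case using init by simp
  next
    case (Suc n) then show ?case using dec[of n] by (simp add: algebra_simps)
  qed
  have Sbound: "(\<Sum>k<T. 1 / (real k + 1) powr \<theta>) \<le> S"
    unfolding S_def using summ_theta[OF th] by (intro sum_le_suminf) auto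
  define M where "M = max (\<sigma> * S) (f x0 - flow)"
  have key: "\<kappa> * (\<Sum>k<T. G k) \<le> 2 * M"
  proof -
    have "\<sigma> * (\<Sum>k<T. 1 / (real k + 1) powr \<theta>) \<le> \<sigma> * S"
      using Sbound sig by (intro mult_left_mono) auto
    moreover have "\<sigma> * S \<le> M" "f x0 - flow \<le> M" unfolding M_def by auto
    ultimately show ?thesis using tele[of T] A2[of "x T"] by linarith
  qed
  show ?thesis
  proof (rule ccontr)
    assume "\<not> ?thesis"
    then have "\<epsilon> < Min ((\<lambda>k. norm (g (x k))) ` {..<T})" by simp
    then have gt: "\<epsilon> < norm (g (x k))" if "k < T" for k
      using that T(1) by (subst (asm) Min_gr_iff) auto
    have "(\<Sum>k<T. \<epsilon>\<^sup>2) < (\<Sum>k<T. G k)"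
      using T(1) gt eps unfolding G_def
      by (intro sum_strict_mono) (auto intro!: power_strict_mono)
    then have "real T * \<epsilon>\<^sup>2 < (\<Sum>k<T. G k)" by simp
    then have lt: "\<kappa> * (real T * \<epsilon>\<^sup>2) < 2 * M" using key mult_strict_left_mono[OF _ \<kappa>pos] by (meson less_le_trans)
    have "real T \<ge> 2 * M / \<kappa> / \<epsilon>\<^sup>2" using T(2) unfolding M_def S_def \<kappa>_def .
    then have "(2 * M / \<kappa> / \<epsilon>\<^sup>2) * \<epsilon>\<^sup>2 \<le> real T * \<epsilon>\<^sup>2"
      by (intro mult_right_mono) auto
    moreover have "(2 * M / \<kappa> / \<epsilon>\<^sup>2) * \<epsilon>\<^sup>2 = 2 * M / \<kappa>" using eps by simp
    ultimately have "real T * \<epsilon>\<^sup>2 \<ge> 2 * M / \<kappa>" by simp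
    then have "\<kappa> * (real T * \<epsilon>\<^sup>2) \<ge> 2 * M" using \<kappa>pos by (simp add: field_simps)
    then show False using lt by simp
  qed
qed

end
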